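(* Let $0<\delta<1$, $p=n^{\delta-1}$, let $H$ be a graph on $m=n^{\rho}$ vertices with $0<\rho<(1-\delta)/2$ and $m$ dividing $n$, let $k'\le m$, and let $6n^{1-\delta}\log n\le k-k'\le\frac{2n}{3}$. Then, for sufficiently large $n$, with probability at least $1-4/n$ over $G\sim G_H(n,p,k)$, every independent set of size $k$ in $G$ contains at least $k'$ vertices of the planted copy of $H$ (the set $M$).
   Context: $G(n,p)$ is the Erdős–Rényi random graph on $[n]$. With $H$ on vertex set $[m]$, partition $[n]$ into parts $P_i=\{(i-1)\frac nm+1,\dots,i\frac nm\}$. Distribution $G_H(n,p,k)$: sample $G'\sim G(n,p)$; choose a uniformly random $M=\{v_1,\dots,v_m\}$ with $v_i\in P_i$ and replace $G'[M]$ by a copy of $H$ with vertex $i$ at $v_i$, giving $G_H$; among the vertices with no neighbor in $M$ choose a uniformly random set $I'$ of size $k-k'$ and delete all edges inside $I'$ (if fewer than $k-k'$ such vertices exist, instead delete all edges inside a uniformly random set of $k$ vertices of $G_H$). *)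

theory Defs
  imports "HOL-Probability.Probability"
begin

text \<open>Simple graphs on a vertex set of natural numbers are represented by their edge sets:
  sets of 2-element sets of vertices.\<close>

definition all_pairs :: "nat set \<Rightarrow> nat set set" where
  "all_pairs V = {e. \<exists>a\<in>V. \<exists>b\<in>V. a \<noteq> b \<and> e = {a, b}}"

definition is_graph_on :: "nat set \<Rightarrow> nat set set \<Rightarrow> bool" where
  "is_graph_on V E \<longleftrightarrow> E \<subseteq> all_pairs V"

definition indep_set :: "nat set set \<Rightarrow> nat set \<Rightarrow> bool" where
  "indep_set E S \<longleftrightarrow> (\<forall>a\<in>S. \<forall>b\<in>S. {a, b} \<notin> E)"

definition gnp :: "nat \<Rightarrow> real \<Rightarrow> nat set set pmf" where
  "gnp n p = map_pmf (\<lambda>f. {e \<in> all_pairs {1..n}. f e})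
                     (Pi_pmf (all_pairs {1..n}) False (\<lambda>_. bernoulli_pmf p))"

definition part :: "nat \<Rightarrow> nat \<Rightarrow> nat \<Rightarrow> nat set" where
  "part n m i = {(i - 1) * (n div m) + 1 .. i * (n div m)}"

definition plant :: "nat \<Rightarrow> nat set set \<Rightarrow> (nat \<Rightarrow> nat) \<Rightarrow> nat set set \<Rightarrow> nat set set" where
  "plant m H v G' = {e \<in> G'. \<not> e \<subseteq> v ` {1..m}} \<union> (\<lambda>e. v ` e) ` H"

definition no_nbr_M :: "nat \<Rightarrow> nat set set \<Rightarrow> nat set \<Rightarrow> nat set" where
  "no_nbr_M n E M = {u \<in> {1..n} - M. \<forall>w\<in>M. {u, w} \<notin> E}"

definition GH :: "nat \<Rightarrow> real \<Rightarrow> nat \<Rightarrow> nat \<Rightarrow> nat set set \<Rightarrow> nat \<Rightarrow> (nat set set \<times> nat set) pmf" where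
  "GH n p k m H k' =
     bind_pmf (gnp n p) (\<lambda>G'.
     bind_pmf (Pi_pmf {1..m} 0 (\<lambda>i. pmf_of_set (part n m i))) (\<lambda>v.
       let M = v ` {1..m};
           E = plant m H v G';
           R = no_nbr_M n E M
       in bind_pmf
            (if k - k' \<le> card R then pmf_of_set {S. S \<subseteq> R \<and> card S = k - k'}
             else pmf_of_set {S. S \<subseteq> {1..n} \<and> card S = k})
            (\<lambda>I. return_pmf (E - {e. e \<subseteq> I}, M))))"

end

theory Submission
  imports Defs
begin


lemma measure_bind_pmf_integral:
  "measure_pmf.prob (bind_pmf M f) X = (\<integral>x. measure_pmf.prob (f x) X \<partial>M)"
proof -
  have "emeasure (measure_pmf (bind_pmf M f)) X = (\<integral>\<^sup>+ x. emeasure (measure_pmf (f x)) X \<partial>M)"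
    by (rule emeasure_bind_pmf)
  also have "\<dots> = (\<integral>\<^sup>+ x. ennreal (measure_pmf.prob (f x) X) \<partial>M)"
    by (simp add: measure_pmf.emeasure_eq_measure)
  also have "\<dots> = ennreal (\<integral>x. measure_pmf.prob (f x) X \<partial>M)"
    by (intro nn_integral_eq_integral measure_pmf.integrable_const_bound[where B=1]) auto
  finally show ?thesis
    by (simp add: measure_pmf.emeasure_eq_measure integral_nonneg)
qed

lemma prob_bind_le:
  fixes M :: "'a pmf" and f :: "'a \<Rightarrow> 'b pmf"
  assumes "\<And>x. x \<in> set_pmf M \<Longrightarrow> x \<notin> A \<Longrightarrow> measure_pmf.prob (f x) X \<le> c" "0 \<le> c"
  shows "measure_pmf.prob (bind_pmf M f) X \<le> measure_pmf.prob M A + c"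
proof -
  have "measure_pmf.prob (bind_pmf M f) X = (\<integral>x. measure_pmf.prob (f x) X \<partial>M)"
    by (rule measure_bind_pmf_integral)
  also have "\<dots> \<le> (\<integral>x. indicator A x + c \<partial>M)"
  proof (rule integral_mono_AE)
    show "integrable (measure_pmf M) (\<lambda>x. measure_pmf.prob (f x) X)"
      by (intro measure_pmf.integrable_const_bound[where B=1]) auto
    show "integrable (measure_pmf M) (\<lambda>x. indicator A x + c)"
      by (intro measure_pmf.integrable_const_bound[where B="1+c"]) (auto simp: indicator_def assms(2))
    show "AE x in measure_pmf M. measure_pmf.prob (f x) X \<le> indicator A x + c"
      using assms by (intro AE_pmfI) (auto simp: indicator_def intro: order.trans[OF measure_pmf.prob_le_1])
  qed
  also have "\<dots> = measure_pmf.prob M A + c"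
    by (subst Bochner_Integration.integral_add)
       (auto intro!: measure_pmf.integrable_const_bound[where B=1] simp: indicator_def)
  finally show ?thesis .
qed

lemma prob_bind_le_const:
  assumes "\<And>x. x \<in> set_pmf M \<Longrightarrow> measure_pmf.prob (f x) X \<le> c" "0 \<le> c"
  shows "measure_pmf.prob (bind_pmf M f) X \<le> c"
  using prob_bind_le[of M "{}" f X c] assms by auto

lemma prob_Pi_bern:
  assumes "finite A" "F \<subseteq> A" "0 \<le> p" "p \<le> 1"
  shows "measure_pmf.prob (Pi_pmf A False (\<lambda>_. bernoulli_pmf p)) {f. \<forall>e\<in>F. f e = c}
         = (if c then p else 1 - p) ^ card F"
proof -
  have "{f. \<forall>e\<in>F. f e = c} = Pi A (\<lambda>e. if e \<in> F then {c} else UNIV)"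
    using assms(2) by (auto simp: Pi_def)
  hence "measure_pmf.prob (Pi_pmf A False (\<lambda>_. bernoulli_pmf p)) {f. \<forall>e\<in>F. f e = c}
     = (\<Prod>e\<in>A. measure_pmf.prob (bernoulli_pmf p) (if e \<in> F then {c} else UNIV))"
    using assms by (simp add: measure_Pi_pmf_Pi)
  also have "\<dots> = (\<Prod>e\<in>A. if e \<in> F then (if c then p else 1 - p) else 1)"
    using assms by (intro prod.cong) (auto simp: measure_pmf_single)
  also have "\<dots> = (\<Prod>e\<in>A \<inter> F. (if c then p else 1 - p))"
    using assms(1) by (rule prod.inter_restrict[symmetric])
  also have "A \<inter> F = F" using assms by auto
  finally show ?thesis by simp
qed



lemma all_pairs_sub_Pow: "all_pairs V \<subseteq> Pow V"
  unfolding all_pairs_def by auto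

lemma finite_all_pairs: "finite V \<Longrightarrow> finite (all_pairs V)"
  using all_pairs_sub_Pow finite_subset by blast

lemma all_pairs_mono: "V \<subseteq> W \<Longrightarrow> all_pairs V \<subseteq> all_pairs W"
  unfolding all_pairs_def by blast

lemma in_all_pairs_iff: "{a, b} \<in> all_pairs V \<longleftrightarrow> a \<in> V \<and> b \<in> V \<and> a \<noteq> b"
  unfolding all_pairs_def by (auto simp: doubleton_eq_iff)

lemma gnp_split:
  fixes n :: nat and M :: "nat set"
  defines "E2 \<equiv> all_pairs ({1..n} - M)"
  defines "E1 \<equiv> all_pairs {1..n} - E2"
  shows "gnp n p = map_pmf (\<lambda>(f,g). {e \<in> E1. f e} \<union> {e \<in> E2. g e})
           (pair_pmf (Pi_pmf E1 False (\<lambda>_. bernoulli_pmf p)) (Pi_pmf E2 False (\<lambda>_. bernoulli_pmf p)))"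
proof -
  have sub: "E2 \<subseteq> all_pairs {1..n}" unfolding E2_def by (intro all_pairs_mono) auto
  have fin1: "finite E1" unfolding E1_def by (intro finite_Diff finite_all_pairs) auto
  have fin2: "finite E2" unfolding E2_def by (intro finite_all_pairs) auto
  have eq: "all_pairs {1..n} = E1 \<union> E2" using sub unfolding E1_def by auto
  have "gnp n p = map_pmf (\<lambda>f. {e \<in> all_pairs {1..n}. f e}) (Pi_pmf (E1 \<union> E2) False (\<lambda>_. bernoulli_pmf p))"
    unfolding gnp_def eq ..
  also have "Pi_pmf (E1 \<union> E2) False (\<lambda>_. bernoulli_pmf p) = map_pmf (\<lambda>(f,g) x. if x \<in> E1 then f x else g x)
             (pair_pmf (Pi_pmf E1 False (\<lambda>_. bernoulli_pmf p)) (Pi_pmf E2 False (\<lambda>_. bernoulli_pmf p)))"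
    using fin1 fin2 by (intro Pi_pmf_union) (auto simp: E1_def)
  also have "map_pmf (\<lambda>f. {e \<in> all_pairs {1..n}. f e}) (map_pmf (\<lambda>(f,g) x. if x \<in> E1 then f x else g x)
             (pair_pmf (Pi_pmf E1 False (\<lambda>_. bernoulli_pmf p)) (Pi_pmf E2 False (\<lambda>_. bernoulli_pmf p))))
     = map_pmf (\<lambda>(f,g). {e \<in> E1. f e} \<union> {e \<in> E2. g e})
           (pair_pmf (Pi_pmf E1 False (\<lambda>_. bernoulli_pmf p)) (Pi_pmf E2 False (\<lambda>_. bernoulli_pmf p)))"
    unfolding map_pmf_comp
    using sub by (intro map_pmf_cong refl) (auto simp: eq E1_def)
  finally show ?thesis .
qed

lemma no_nbr_eq:
  fixes n m :: nat and G1 G2 :: "nat set set"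
  assumes "M = v ` {1..m}" "G2 \<subseteq> all_pairs ({1..n} - M)" "is_graph_on {1..m} H"
  shows "no_nbr_M n (plant m H v (G1 \<union> G2)) M = {u \<in> {1..n} - M. \<forall>w\<in>M. {u, w} \<notin> G1}"
proof -
  have "{u, w} \<in> plant m H v (G1 \<union> G2) \<longleftrightarrow> {u, w} \<in> G1" if "u \<notin> M" "w \<in> M" for u w
  proof -
    have "\<not> {u, w} \<subseteq> v ` {1..m}" using that assms(1) by auto
    moreover have "{u, w} \<notin> (\<lambda>e. v ` e) ` H"
    proof
      assume "{u, w} \<in> (\<lambda>e. v ` e) ` H"
      then obtain e where "e \<in> H" "{u,w} = v ` e" by auto
      moreover have "e \<subseteq> {1..m}" using \<open>e \<in> H\<close> assms(3) unfolding is_graph_on_def all_pairs_def by auto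
      ultimately show False using that assms(1) by auto
    qed
    moreover have "{u, w} \<notin> G2" using assms(2) that by (auto simp: in_all_pairs_iff dest!: subsetD)
    ultimately show ?thesis unfolding plant_def by auto
  qed
  thus ?thesis unfolding no_nbr_M_def by auto
qed




definition Fab :: "nat set \<Rightarrow> nat set \<Rightarrow> nat set set" where
  "Fab A B = {{a, x} | a x. a \<in> B \<and> x \<in> A \<union> B \<and> a \<noteq> x}"

lemma bad_to_AB:
  fixes n k k' :: nat
  assumes "S \<subseteq> {1..n}" "card S = k" "indep_set Efin S" "\<not> k' \<le> card (S \<inter> M)"
    "I \<subseteq> {1..n} - M" "card I = k - k'"  "k' \<le> k"
    "\<And>a b. a \<in> {1..n} - M - I \<Longrightarrow> b \<in> {1..n} - M \<Longrightarrow> a \<noteq> b \<Longrightarrow> g {a, b} \<Longrightarrow> {a, b} \<in> Efin"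
  shows "\<exists>b A B. b \<in> {1..k-k'+1} \<and> A \<subseteq> I \<and> card A = k-k'+1-b \<and> B \<subseteq> {1..n} - M - I
           \<and> card B = b \<and> (\<forall>e \<in> Fab A B. \<not> g e)"
proof -
  have finS: "finite S" using assms(1) finite_subset by blast
  have finI: "finite I" using assms(5) finite_subset by blast
  have "card S = card (S \<inter> M) + card (S - M)"
    using finS by (metis card_Int_Diff)
  hence "k - k' + 1 \<le> card (S - M)" using assms(2,4,7) by linarith
  then obtain T where T: "T \<subseteq> S - M" "card T = k - k' + 1"
    by (meson obtain_subset_with_card_n)
  have finT: "finite T" using T finS finite_subset by blast
  define A where "A = T \<inter> I"
  define B where "B = T - I"
  have cardA: "card A \<le> k - k'" using card_mono[OF finI] assms(6) unfolding A_def by (metis inf_le2)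
  have "card T = card A + card B"
    unfolding A_def B_def using finT by (metis card_Int_Diff)
  hence cAB: "card A + card B = k - k' + 1" using T by simp
  show ?thesis
  proof (intro exI conjI)
    show "card B \<in> {1..k-k'+1}" using cAB cardA by auto
    show "A \<subseteq> I" unfolding A_def by auto
    show "card A = k - k' + 1 - card B" using cAB by simp
    show "B \<subseteq> {1..n} - M - I" unfolding B_def using T assms(1) by auto
    show "card B = card B" ..
    show "\<forall>e\<in>Fab A B. \<not> g e"
    proof
      fix e assume "e \<in> Fab A B"
      then obtain a x where e: "e = {a, x}" "a \<in> B" "x \<in> A \<union> B" "a \<noteq> x" unfolding Fab_def by auto
      have ax: "a \<in> S" "x \<in> S" using e T unfolding A_def B_def by auto
      have "{a, x} \<notin> Efin" using assms(3) ax unfolding indep_set_def by auto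
      moreover have "a \<in> {1..n} - M - I" "x \<in> {1..n} - M" using e T assms(1) unfolding A_def B_def by auto
      ultimately show "\<not> g e" using assms(8) e by auto
    qed
  qed
qed

lemma card_Fab:
  assumes "finite A" "finite B" "A \<inter> B = {}"
  shows "card B * card A + (card B choose 2) \<le> card (Fab A B)"
proof -
  define C1 where "C1 = (\<lambda>(a, x). {a, x}) ` (B \<times> A)"
  define C2 where "C2 = {e. e \<subseteq> B \<and> card e = 2}"
  have inj: "inj_on (\<lambda>(a, x). {a, x}) (B \<times> A)"
    using assms(3) by (auto simp: inj_on_def doubleton_eq_iff)
  have c1: "card C1 = card B * card A" unfolding C1_def using card_image[OF inj] by (simp add: card_cartesian_product)
  have c2: "card C2 = card B choose 2" unfolding C2_def using n_subsets[OF assms(2)] by simp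
  have dis: "C1 \<inter> C2 = {}" unfolding C1_def C2_def using assms(3) by auto
  have sub: "C1 \<union> C2 \<subseteq> Fab A B"
  proof
    fix e assume "e \<in> C1 \<union> C2"
    then show "e \<in> Fab A B"
    proof
      assume "e \<in> C1" then show ?thesis unfolding C1_def Fab_def using assms(3) by fastforce
    next
      assume "e \<in> C2"
      then obtain a x where "e = {a, x}" "a \<noteq> x" "e \<subseteq> B" unfolding C2_def by (auto simp: card_2_iff)
      then show ?thesis unfolding Fab_def by auto
    qed
  qed
  have finF: "finite (Fab A B)"
  proof -
    have "Fab A B \<subseteq> Pow (A \<union> B)" unfolding Fab_def by auto
    thus ?thesis using assms by (meson finite_Pow_iff finite_UnI finite_subset)
  qed
  have "card (C1 \<union> C2) = card C1 + card C2"
    using dis finF sub by (intro card_Un_disjoint) (auto intro: finite_subset)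
  thus ?thesis using card_mono[OF finF sub] c1 c2 by simp
qed




lemma arith_bK:
  fixes b K :: nat
  assumes "b \<le> K + 1"
  shows "b * K \<le> 2 * (b * (K + 1 - b) + (b choose 2))"
proof -
  obtain r where r: "K + 1 = b + r" using assms le_Suc_ex by auto
  have ev: "even (b * (b - 1))" by (cases "even b") (auto simp: even_mult_iff)
  have "2 * (b choose 2) = b * (b - 1)" using ev by (simp add: choose_two)
  moreover have "K + 1 - b = r" using r by simp
  moreover have "b * K + b = b * (b - 1) + b * r + b"
  proof -
    have "b * K + b = b * (K + 1)" by (simp add: algebra_simps)
    also have "\<dots> = b * b + b * r" using r by (simp add: algebra_simps)
    also have "b * b = b * (b - 1) + b" by (cases b) auto
    finally show ?thesis by simp
  qed
  ultimately show ?thesis by (simp add: algebra_simps)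
qed

lemma binom_le_pow_any: "N choose r \<le> N ^ r"
  by (cases "r \<le> N") (auto simp: binomial_le_pow binomial_eq_0)

lemma one_minus_pow_le:
  fixes p :: real and c :: nat and x :: real
  assumes "0 \<le> p" "p \<le> 1" "x \<le> p * c"
  shows "(1 - p) ^ c \<le> exp (- x)"
proof -
  have "(1 - p) ^ c \<le> exp (- p) ^ c"
    using assms by (intro power_mono) (auto simp: exp_ge_add_one_self[of "-p", simplified] )
  also have "\<dots> = exp (- p * c)" by (simp add: exp_of_nat_mult[symmetric] mult.commute)
  also have "\<dots> \<le> exp (- x)" using assms by simp
  finally show ?thesis .
qed




lemma exp_neg_ln_pow:
  assumes "1 \<le> n"
  shows "exp (- (real b * ln (real n))) = 1 / real n ^ b"
proof -
  have "exp (real b * ln (real n)) = exp (ln (real n)) ^ b" by (rule exp_of_nat_mult)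
  also have "\<dots> = real n ^ b" using assms by simp
  finally show ?thesis by (simp add: exp_minus field_simps)
qed

lemma bad2_prob:
  fixes n K :: nat and p :: real and V I :: "nat set"
  assumes p01: "0 \<le> p" "p \<le> 1" and n1: "1 \<le> n" and pK: "6 * ln (real n) \<le> p * real K"
    and Kn: "K + 1 \<le> n" and IV: "I \<subseteq> V" and cI: "card I = K" and Vn: "V \<subseteq> {1..n}"
  shows "measure_pmf.prob (Pi_pmf (all_pairs V) False (\<lambda>_. bernoulli_pmf p))
     {g. \<exists>b A B. b \<in> {1..K+1} \<and> A \<subseteq> I \<and> card A = K+1-b \<and> B \<subseteq> V - I \<and> card B = b
          \<and> (\<forall>e\<in>Fab A B. \<not> g e)} \<le> 1 / real n"
proof -
  let ?P = "Pi_pmf (all_pairs V) False (\<lambda>_. bernoulli_pmf p)"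
  define Pa where "Pa b = {A. A \<subseteq> I \<and> card A = K+1-b} \<times> {B. B \<subseteq> V - I \<and> card B = b}" for b
  define J where "J = Sigma {1..K+1} Pa"
  define Ev where "Ev j = {g. \<forall>e\<in>Fab (fst (snd j)) (snd (snd j)). g e = False}"
    for j :: "nat \<times> nat set \<times> nat set"
  have finV: "finite V" using Vn finite_subset by blast
  have finI: "finite I" using IV finV finite_subset by blast
  have finPa: "finite (Pa b)" for b
  proof -
    have "finite {A. A \<subseteq> I \<and> card A = K+1-b}"
      by (rule finite_subset[of _ "Pow I"]) (auto simp: finI)
    moreover have "finite {B. B \<subseteq> V - I \<and> card B = b}"
      by (rule finite_subset[of _ "Pow V"]) (auto simp: finV)
    ultimately show ?thesis unfolding Pa_def by (rule finite_cartesian_product)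
  qed
  have finJ: "finite J" unfolding J_def using finPa by auto
  have "measure_pmf.prob ?P {g. \<exists>b A B. b \<in> {1..K+1} \<and> A \<subseteq> I \<and> card A = K+1-b \<and> B \<subseteq> V - I \<and> card B = b
          \<and> (\<forall>e\<in>Fab A B. \<not> g e)} \<le> measure_pmf.prob ?P (\<Union>j\<in>J. Ev j)"
  proof (rule measure_pmf.finite_measure_mono)
    show "{g. \<exists>b A B. b \<in> {1..K+1} \<and> A \<subseteq> I \<and> card A = K+1-b \<and> B \<subseteq> V - I \<and> card B = b
          \<and> (\<forall>e\<in>Fab A B. \<not> g e)} \<subseteq> (\<Union>j\<in>J. Ev j)"
    proof
      fix g assume "g \<in> {g. \<exists>b A B. b \<in> {1..K+1} \<and> A \<subseteq> I \<and> card A = K+1-b \<and> B \<subseteq> V - I \<and> card B = b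
          \<and> (\<forall>e\<in>Fab A B. \<not> g e)}"
      then obtain b A B where h: "b \<in> {1..K+1}" "A \<subseteq> I" "card A = K+1-b" "B \<subseteq> V - I" "card B = b"
          "\<forall>e\<in>Fab A B. \<not> g e" by blast
      hence "(b,A,B) \<in> J" "g \<in> Ev (b,A,B)" by (auto simp: J_def Pa_def Ev_def)
      thus "g \<in> (\<Union>j\<in>J. Ev j)" by blast
    qed
  qed auto
  also have "\<dots> \<le> (\<Sum>j\<in>J. measure_pmf.prob ?P (Ev j))"
    by (rule measure_pmf.finite_measure_subadditive_finite) (auto simp: finJ)
  also have "\<dots> \<le> (\<Sum>j\<in>J. 1 / real n ^ (3 * fst j))"
  proof (rule sum_mono)
    fix j assume "j \<in> J"
    then obtain b A B where j: "j = (b,A,B)" "b \<in> {1..K+1}" "A \<subseteq> I" "card A = K+1-b" "B \<subseteq> V - I" "card B = b"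
      unfolding J_def Pa_def by auto
    have Fsub: "Fab A B \<subseteq> all_pairs V" unfolding Fab_def all_pairs_def using j IV by blast
    have finA: "finite A" using j finI finite_subset by blast
    have finB: "finite B" using j finV finite_subset by (metis Diff_subset subset_trans)
    have disj: "A \<inter> B = {}" using j by auto
    have "b * K \<le> 2 * (b * (K + 1 - b) + (b choose 2))" using j by (intro arith_bK) auto
    also have "b * (K + 1 - b) + (b choose 2) \<le> card (Fab A B)"
      using card_Fab[OF finA finB disj] j by (simp add: mult.commute)
    finally have bK: "real b * real K \<le> 2 * real (card (Fab A B))" by (simp flip: of_nat_mult)
    have "measure_pmf.prob ?P (Ev j) = (1 - p) ^ card (Fab A B)"
      using prob_Pi_bern[OF finite_all_pairs[OF finV] Fsub p01, of False] by (simp add: Ev_def j)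
    also have "\<dots> \<le> exp (- (real (3 * b) * ln (real n)))"
    proof (rule one_minus_pow_le[OF p01])
      have "real (3 * b) * ln (real n) = real b * (6 * ln (real n)) / 2" by simp
      also have "\<dots> \<le> real b * (p * real K) / 2" using pK by (intro divide_right_mono mult_left_mono) auto
      also have "\<dots> = p * (real b * real K) / 2" by simp
      also have "\<dots> \<le> p * (2 * real (card (Fab A B))) / 2"
        using bK p01 by (intro divide_right_mono mult_left_mono) auto
      finally show "real (3 * b) * ln (real n) \<le> p * real (card (Fab A B))" by simp
    qed
    also have "\<dots> = 1 / real n ^ (3 * fst j)" using exp_neg_ln_pow[OF n1, of "3 * b"] j by simp
    finally show "measure_pmf.prob ?P (Ev j) \<le> 1 / real n ^ (3 * fst j)" .
  qed
  also have "\<dots> = (\<Sum>b\<in>{1..K+1}. real (card (Pa b)) * (1 / real n ^ (3 * b)))"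
    unfolding J_def using sum.Sigma[of "{1..K+1}" Pa "\<lambda>b y. 1 / real n ^ (3 * b)"] finPa
    by (simp add: split_beta)
  also have "\<dots> \<le> (\<Sum>b\<in>{1..K+1}. 1 / real n ^ 2)"
  proof (rule sum_mono)
    fix b assume b: "b \<in> {1..K+1}"
    have "card (Pa b) = (K choose (K+1-b)) * (card (V - I) choose b)"
      unfolding Pa_def card_cartesian_product
      using n_subsets[OF finI] n_subsets[of "V - I"] finV cI by auto
    also have "K choose (K+1-b) = K choose (b - 1)"
      using b by (subst binomial_symmetric) (auto simp: Suc_diff_le)
    also have "\<dots> \<le> n ^ (b - 1)"
      using binom_le_pow_any[of K "b-1"] power_mono[of K n "b-1"] Kn by linarith
    also have "card (V - I) choose b \<le> n ^ b"
    proof -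
      have "card (V - I) \<le> card V" using finV by (intro card_mono) auto
      also have "card V \<le> n" using card_mono[OF _ Vn] by simp
      finally have "card (V - I) \<le> n" .
      thus ?thesis using binom_le_pow_any[of "card (V - I)" b] power_mono[of "card (V-I)" n b] by linarith
    qed
    finally have cP: "card (Pa b) \<le> n ^ (b - 1) * n ^ b" by (simp add: mult_le_mono)
    have "card (Pa b) * n ^ 2 \<le> n ^ (b - 1) * n ^ b * n ^ 2" using cP by (rule mult_le_mono1)
    also have "n ^ (b - 1) * n ^ b * n ^ 2 = n ^ (2 * b + 1)"
      using b by (simp add: power_add[symmetric] mult_2)
    also have "\<dots> \<le> n ^ (3 * b)" using b n1 by (intro power_increasing) auto
    finally have "real (card (Pa b) * n ^ 2) \<le> real (n ^ (3 * b))" by (simp only: of_nat_le_iff)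
    hence "real (card (Pa b)) * real n ^ 2 \<le> real n ^ (3 * b)" by simp
    thus "real (card (Pa b)) * (1 / real n ^ (3 * b)) \<le> 1 / real n ^ 2"
      using n1 by (simp add: field_simps)
  qed
  also have "\<dots> = real (K + 1) / real n ^ 2" by simp
  also have "\<dots> \<le> real n / real n ^ 2" using Kn by (intro divide_right_mono) auto
  also have "\<dots> = 1 / real n" using n1 by (simp add: power2_eq_square)
  finally show ?thesis .
qed




lemma bad1_prob:
  fixes n m K t :: nat and p :: real and M :: "nat set"
  defines "E1 \<equiv> all_pairs {1..n} - all_pairs ({1..n} - M)"
  assumes p01: "0 \<le> p" "p \<le> 1" and Mn: "M \<subseteq> {1..n}" and cM: "card M \<le> m"
    and tK: "t + m + K \<le> n" and big: "2 ^ n * (real m * p) ^ t \<le> 1 / real n"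
  shows "measure_pmf.prob (Pi_pmf E1 False (\<lambda>_. bernoulli_pmf p))
      {f. card {u \<in> {1..n} - M. \<forall>w\<in>M. {u, w} \<notin> {e \<in> E1. f e}} < K} \<le> 1 / real n"
proof -
  let ?P = "Pi_pmf E1 False (\<lambda>_. bernoulli_pmf p)"
  define V where "V = {1..n} - M"
  define Us where "Us = {U. U \<subseteq> V \<and> card U = t}"
  define J where "J = Sigma Us (\<lambda>U. U \<rightarrow>\<^sub>E M)"
  define Fp where "Fp j = (\<lambda>u. {u, snd j u}) ` fst j" for j :: "nat set \<times> (nat \<Rightarrow> nat)"
  define Ev where "Ev j = {f. \<forall>e\<in>Fp j. f e = True}" for j
  have finV: "finite V" unfolding V_def by auto
  have finM: "finite M" using Mn finite_subset by blast
  have finE1: "finite E1" unfolding E1_def by (intro finite_Diff finite_all_pairs) auto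
  have finUs: "finite Us" unfolding Us_def by (rule finite_subset[of _ "Pow V"]) (auto simp: finV)
  have finJ: "finite J" unfolding J_def using finUs finM
    by (intro finite_SigmaI finite_PiE) (auto simp: Us_def V_def intro: finite_subset[OF _ finite_atLeastAtMost])
  have cV: "card V + card M = n" unfolding V_def using Mn
    by (metis card_Diff_subset card_atLeastAtMost diff_Suc_1 finM le_add_diff_inverse2 card_mono finite_atLeastAtMost)
  have cont: "{f. card {u \<in> {1..n} - M. \<forall>w\<in>M. {u, w} \<notin> {e \<in> E1. f e}} < K} \<subseteq> (\<Union>j\<in>J. Ev j)"
  proof
    fix f assume "f \<in> {f. card {u \<in> {1..n} - M. \<forall>w\<in>M. {u, w} \<notin> {e \<in> E1. f e}} < K}"
    hence cR: "card {u \<in> V. \<forall>w\<in>M. {u, w} \<notin> {e \<in> E1. f e}} < K" unfolding V_def by simp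
    define R where "R = {u \<in> V. \<forall>w\<in>M. {u, w} \<notin> {e \<in> E1. f e}}"
    have "card (V - R) = card V - card R" using finV by (intro card_Diff_subset) (auto simp: R_def intro: finite_subset)
    hence "t \<le> card (V - R)" using cR cV cM tK unfolding R_def by linarith
    then obtain U where U: "U \<subseteq> V - R" "card U = t" by (meson obtain_subset_with_card_n)
    have ex: "\<exists>w. w \<in> M \<and> f {u, w}" if "u \<in> U" for u using U that unfolding R_def by auto
    define \<phi> where "\<phi> = restrict (\<lambda>u. SOME w. w \<in> M \<and> f {u, w}) U"
    have phi: "\<phi> u \<in> M \<and> f {u, \<phi> u}" if "u \<in> U" for u
      using someI_ex[OF ex[OF that]] that unfolding \<phi>_def by auto
    have "(U, \<phi>) \<in> J" unfolding J_def Us_def using U phi by (auto simp: \<phi>_def)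
    moreover have "f \<in> Ev (U, \<phi>)" unfolding Ev_def Fp_def using phi by auto
    ultimately show "f \<in> (\<Union>j\<in>J. Ev j)" by blast
  qed
  have "measure_pmf.prob ?P {f. card {u \<in> {1..n} - M. \<forall>w\<in>M. {u, w} \<notin> {e \<in> E1. f e}} < K}
        \<le> measure_pmf.prob ?P (\<Union>j\<in>J. Ev j)"
    using cont by (rule measure_pmf.finite_measure_mono) auto
  also have "\<dots> \<le> (\<Sum>j\<in>J. measure_pmf.prob ?P (Ev j))"
    by (rule measure_pmf.finite_measure_subadditive_finite) (auto simp: finJ)
  also have "\<dots> = (\<Sum>j\<in>J. p ^ t)"
  proof (rule sum.cong[OF refl])
    fix j assume "j \<in> J"
    then obtain U \<phi> where j: "j = (U, \<phi>)" "U \<subseteq> V" "card U = t" "\<phi> \<in> U \<rightarrow>\<^sub>E M"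
      unfolding J_def Us_def by auto
    have sub: "Fp j \<subseteq> E1"
    proof
      fix e assume "e \<in> Fp j"
      then obtain u where u: "u \<in> U" "e = {u, \<phi> u}" unfolding Fp_def j by auto
      have "\<phi> u \<in> M" using j u by auto
      moreover have "u \<in> V" using u j by auto
      ultimately show "e \<in> E1" unfolding E1_def V_def using u Mn by (auto simp: in_all_pairs_iff)
    qed
    have inj: "inj_on (\<lambda>u. {u, \<phi> u}) U"
    proof (rule inj_onI)
      fix x y assume xy: "x \<in> U" "y \<in> U" "{x, \<phi> x} = {y, \<phi> y}"
      have "x \<notin> M" "y \<notin> M" "\<phi> x \<in> M" "\<phi> y \<in> M" using xy j unfolding V_def by auto
      thus "x = y" using xy(3) by (auto simp: doubleton_eq_iff)
    qed
    have "card (Fp j) = t" unfolding Fp_def j using card_image[OF inj] j by simp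
    thus "measure_pmf.prob ?P (Ev j) = p ^ t"
      using prob_Pi_bern[OF finE1 sub p01, of True] unfolding Ev_def by simp
  qed
  also have "\<dots> = real (card J) * p ^ t" by simp
  also have "\<dots> \<le> (2 ^ n * real m ^ t) * p ^ t"
  proof -
    have "card J = (\<Sum>U\<in>Us. card (U \<rightarrow>\<^sub>E M))" unfolding J_def
      using finUs by (intro card_SigmaI) (auto simp: Us_def intro!: finite_PiE finM intro: finite_subset[OF _ finV])
    also have "\<dots> = (\<Sum>U\<in>Us. card M ^ t)"
    proof (intro sum.cong refl)
      fix U assume "U \<in> Us"
      hence "finite U" "card U = t" unfolding Us_def using finV finite_subset by auto
      thus "card (U \<rightarrow>\<^sub>E M) = card M ^ t" by (simp add: card_PiE)
    qed
    also have "\<dots> = card Us * card M ^ t" by simp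
    also have "\<dots> \<le> 2 ^ n * m ^ t"
    proof (intro mult_le_mono power_mono cM zero_le)
      have "card Us = card V choose t" unfolding Us_def using n_subsets[OF finV] by simp
      also have "\<dots> \<le> 2 ^ card V" by (rule binomial_le_pow2)
      also have "\<dots> \<le> 2 ^ n" using cV by (intro power_increasing) auto
      finally show "card Us \<le> 2 ^ n" .
    qed
    finally have "real (card J) \<le> real (2 ^ n * m ^ t)" by (simp only: of_nat_le_iff)
    hence "real (card J) \<le> 2 ^ n * real m ^ t" by simp
    thus ?thesis using p01 by (intro mult_right_mono) auto
  qed
  also have "\<dots> = 2 ^ n * (real m * p) ^ t" by (simp add: power_mult_distrib)
  also have "\<dots> \<le> 1 / real n" by (rule big)
  finally show ?thesis .
qed



lemma part_facts:
  fixes n m i :: nat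
  assumes "0 < m" "m dvd n" "1 \<le> n" "i \<in> {1..m}"
  shows "part n m i \<noteq> {}" "part n m i \<subseteq> {1..n}"
proof -
  define q where "q = n div m"
  have mq: "m * q = n" using assms(2) unfolding q_def by simp
  have q1: "1 \<le> q"
  proof (rule ccontr)
    assume "\<not> 1 \<le> q" hence "q = 0" by simp
    thus False using mq assms(3) by simp
  qed
  have "(i - 1) * q + 1 \<le> i * q" using assms(4) q1
  proof -
    obtain j where "i = Suc j" using assms(4) by (cases i) auto
    thus ?thesis using q1 by simp
  qed
  thus "part n m i \<noteq> {}" unfolding part_def q_def by auto
  have iq: "i * q \<le> n" using mult_le_mono1[of i m q] assms(4) mq by auto
  have pe: "part n m i = {(i-1)*q+1..i*q}" by (simp add: part_def q_def)
  show "part n m i \<subseteq> {1..n}" unfolding pe using iq by auto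
qed



lemma bind_map_pair_pmf:
  "bind_pmf (map_pmf h (pair_pmf A B)) \<phi> = bind_pmf A (\<lambda>a. bind_pmf B (\<lambda>b. \<phi> (h (a, b))))"
  by (simp add: pair_pmf_def bind_map_pmf bind_assoc_pmf bind_return_pmf)

lemma main_finite:
  fixes n m k k' t :: nat and p :: real and H :: "nat set set"
  assumes p01: "0 \<le> p" "p \<le> 1" and n1: "1 \<le> n" and m0: "0 < m" and mdvd: "m dvd n"
    and H: "is_graph_on {1..m} H" and kk: "k' \<le> k"
    and pK: "6 * ln (real n) \<le> p * real (k - k')" and Kn: "k - k' + 1 \<le> n"
    and tK: "t + m + (k - k') \<le> n" and big: "2 ^ n * (real m * p) ^ t \<le> 1 / real n"
  shows "measure_pmf.prob (GH n p k m H k')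
     (- {(E, M). \<forall>S. S \<subseteq> {1..n} \<and> card S = k \<and> indep_set E S \<longrightarrow> k' \<le> card (S \<inter> M)}) \<le> 2 / real n"
proof -
  define K where "K = k - k'"
  define Bad where "Bad = - {(E, M). \<forall>S. S \<subseteq> {1..n} \<and> card S = k \<and> indep_set E S \<longrightarrow> k' \<le> card (S \<inter> M)}"
  define Vd where "Vd = Pi_pmf {1..m} 0 (\<lambda>i. pmf_of_set (part n m i))"
  define \<Phi> where "\<Phi> G' v = (let M = v ` {1..m}; E = plant m H v G'; R = no_nbr_M n E M
       in bind_pmf
            (if k - k' \<le> card R then pmf_of_set {S. S \<subseteq> R \<and> card S = k - k'}
             else pmf_of_set {S. S \<subseteq> {1..n} \<and> card S = k})
            (\<lambda>I. return_pmf (E - {e. e \<subseteq> I}, M)))" for G' v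
  have GH_eq: "GH n p k m H k' = bind_pmf Vd (\<lambda>v. bind_pmf (gnp n p) (\<lambda>G'. \<Phi> G' v))"
    unfolding GH_def Vd_def \<Phi>_def by (rule bind_commute_pmf)
  have "measure_pmf.prob (GH n p k m H k') Bad \<le> 2 / real n"
    unfolding GH_eq
  proof (rule prob_bind_le_const)
    fix v assume v: "v \<in> set_pmf Vd"
    define M where "M = v ` {1..m}"
    have vi: "v i \<in> part n m i" if "i \<in> {1..m}" for i
    proof -
      have "v \<in> PiE_dflt {1..m} 0 (set_pmf \<circ> (\<lambda>i. pmf_of_set (part n m i)))"
        using v unfolding Vd_def by (simp add: set_Pi_pmf)
      hence "v i \<in> set_pmf (pmf_of_set (part n m i))" using that by (auto simp: PiE_dflt_def)
      thus ?thesis using part_facts[OF m0 mdvd n1 that] by (simp add: part_def)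
    qed
    have Mn: "M \<subseteq> {1..n}" unfolding M_def using vi part_facts(2)[OF m0 mdvd n1] by blast
    have cM: "card M \<le> m" unfolding M_def using card_image_le[of "{1..m}" v] by simp
    define E2 where "E2 = all_pairs ({1..n} - M)"
    define E1 where "E1 = all_pairs {1..n} - E2"
    define B1 where "B1 = Pi_pmf E1 False (\<lambda>_. bernoulli_pmf p)"
    define B2 where "B2 = Pi_pmf E2 False (\<lambda>_. bernoulli_pmf p)"
    define A1 where "A1 = {f. card {u \<in> {1..n} - M. \<forall>w\<in>M. {u, w} \<notin> {e \<in> E1. f e}} < K}"
    have gs: "gnp n p = map_pmf (\<lambda>(f,g). {e \<in> E1. f e} \<union> {e \<in> E2. g e}) (pair_pmf B1 B2)"
      unfolding E1_def E2_def B1_def B2_def by (rule gnp_split)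
    have "measure_pmf.prob (bind_pmf (gnp n p) (\<lambda>G'. \<Phi> G' v)) Bad
       = measure_pmf.prob (bind_pmf B1 (\<lambda>f. bind_pmf B2 (\<lambda>g. \<Phi> ({e \<in> E1. f e} \<union> {e \<in> E2. g e}) v))) Bad"
      unfolding gs bind_map_pair_pmf by simp
    also have "\<dots> \<le> measure_pmf.prob B1 A1 + 1 / real n"
    proof (rule prob_bind_le)
      fix f assume "f \<in> set_pmf B1" "f \<notin> A1"
      define G1 where "G1 = {e \<in> E1. f e}"
      define R where "R = {u \<in> {1..n} - M. \<forall>w\<in>M. {u, w} \<notin> G1}"
      have KR: "K \<le> card R" using \<open>f \<notin> A1\<close> unfolding A1_def R_def G1_def by simp
      have finR: "finite R" unfolding R_def by auto
      define Q where "Q = pmf_of_set {S. S \<subseteq> R \<and> card S = K}"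
      define X where "X g I = (plant m H v (G1 \<union> {e \<in> E2. g e}) - {e. e \<subseteq> I}, M)" for g I
      have Phi_eq: "\<Phi> (G1 \<union> {e \<in> E2. g e}) v = bind_pmf Q (\<lambda>I. return_pmf (X g I))" for g
      proof -
        have "no_nbr_M n (plant m H v (G1 \<union> {e \<in> E2. g e})) M = R"
          unfolding R_def by (rule no_nbr_eq[OF _ _ H]) (auto simp: M_def E2_def)
        thus ?thesis unfolding \<Phi>_def Let_def Q_def X_def using KR by (simp add: M_def K_def)
      qed
      have "measure_pmf.prob (bind_pmf B2 (\<lambda>g. \<Phi> ({e \<in> E1. f e} \<union> {e \<in> E2. g e}) v)) Bad
          = measure_pmf.prob (bind_pmf Q (\<lambda>I. bind_pmf B2 (\<lambda>g. return_pmf (X g I)))) Bad"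
        unfolding G1_def[symmetric] Phi_eq by (subst bind_commute_pmf) (rule refl)
      also have "\<dots> \<le> 1 / real n"
      proof (rule prob_bind_le_const)
        fix I assume I: "I \<in> set_pmf Q"
        have ne: "{S. S \<subseteq> R \<and> card S = K} \<noteq> {}" using KR by (auto dest: obtain_subset_with_card_n)
        have fin: "finite {S. S \<subseteq> R \<and> card S = K}" by (rule finite_subset[of _ "Pow R"]) (auto simp: finR)
        have IR: "I \<subseteq> R" "card I = K" using I ne fin unfolding Q_def by auto
        have IV: "I \<subseteq> {1..n} - M" using IR unfolding R_def by auto
        have "measure_pmf.prob (bind_pmf B2 (\<lambda>g. return_pmf (X g I))) Bad
            = measure_pmf.prob B2 {g. X g I \<in> Bad}"
          by (simp add: map_pmf_def[symmetric] measure_map_pmf vimage_def)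
        also have "\<dots> \<le> measure_pmf.prob B2
           {g. \<exists>b A B. b \<in> {1..K+1} \<and> A \<subseteq> I \<and> card A = K+1-b \<and> B \<subseteq> ({1..n} - M) - I \<and> card B = b
          \<and> (\<forall>e\<in>Fab A B. \<not> g e)}"
        proof (rule measure_pmf.finite_measure_mono)
          show "{g. X g I \<in> Bad} \<subseteq> {g. \<exists>b A B. b \<in> {1..K+1} \<and> A \<subseteq> I \<and> card A = K+1-b \<and> B \<subseteq> ({1..n} - M) - I \<and> card B = b
          \<and> (\<forall>e\<in>Fab A B. \<not> g e)}"
          proof
            fix g assume "g \<in> {g. X g I \<in> Bad}"
            then obtain S where S: "S \<subseteq> {1..n}" "card S = k"
              "indep_set (plant m H v (G1 \<union> {e \<in> E2. g e}) - {e. e \<subseteq> I}) S" "\<not> k' \<le> card (S \<inter> M)"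
              unfolding Bad_def X_def by auto
            have pres: "{a, b} \<in> plant m H v (G1 \<union> {e \<in> E2. g e}) - {e. e \<subseteq> I}"
              if "a \<in> {1..n} - M - I" "b \<in> {1..n} - M" "a \<noteq> b" "g {a, b}" for a b
            proof -
              have "{a, b} \<in> E2" unfolding E2_def using that by (simp add: in_all_pairs_iff)
              moreover have "\<not> {a, b} \<subseteq> v ` {1..m}" using that unfolding M_def by auto
              ultimately show ?thesis using that unfolding plant_def by auto
            qed
            have "\<exists>b A B. b \<in> {1..k-k'+1} \<and> A \<subseteq> I \<and> card A = k-k'+1-b \<and> B \<subseteq> {1..n} - M - I
               \<and> card B = b \<and> (\<forall>e \<in> Fab A B. \<not> g e)"
              using IV IR(2) kk pres unfolding K_def by (intro bad_to_AB[OF S]) auto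
            thus "g \<in> {g. \<exists>b A B. b \<in> {1..K+1} \<and> A \<subseteq> I \<and> card A = K+1-b \<and> B \<subseteq> ({1..n} - M) - I \<and> card B = b
              \<and> (\<forall>e\<in>Fab A B. \<not> g e)}" unfolding K_def by simp
          qed
        qed auto
        also have "\<dots> \<le> 1 / real n"
          unfolding B2_def E2_def
          using p01 n1 pK Kn IV IR(2) unfolding K_def by (intro bad2_prob) auto
        finally show "measure_pmf.prob (bind_pmf B2 (\<lambda>g. return_pmf (X g I))) Bad \<le> 1 / real n" .
      qed simp
      finally show "measure_pmf.prob (bind_pmf B2 (\<lambda>g. \<Phi> ({e \<in> E1. f e} \<union> {e \<in> E2. g e}) v)) Bad \<le> 1 / real n" .
    qed simp
    also have "measure_pmf.prob B1 A1 \<le> 1 / real n"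
      unfolding B1_def A1_def E1_def E2_def K_def
      using p01 Mn cM tK big by (intro bad1_prob) auto
    finally show "measure_pmf.prob (bind_pmf (gnp n p) (\<lambda>G'. \<Phi> G' v)) Bad \<le> 2 / real n" by simp
  qed simp
  thus ?thesis unfolding Bad_def .
qed




theorem corollaryC2:
  fixes \<delta> \<rho> :: real
  assumes "0 < \<delta>" "\<delta> < 1" "0 < \<rho>" "\<rho> < (1 - \<delta>) / 2"
  shows "\<exists>N::nat. \<forall>n \<ge> N. \<forall>m k k' :: nat. \<forall>H :: nat set set.
           real m = real n powr \<rho> \<longrightarrow> m dvd n \<longrightarrow> is_graph_on {1..m} H \<longrightarrow>
           k' \<le> m \<longrightarrow>
           6 * real n powr (1 - \<delta>) * ln (real n) \<le> real k - real k' \<longrightarrow>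
           real k - real k' \<le> 2 * real n / 3 \<longrightarrow>
           measure_pmf.prob (GH n (real n powr (\<delta> - 1)) k m H k')
             {(E, M). \<forall>S. S \<subseteq> {1..n} \<and> card S = k \<and> indep_set E S \<longrightarrow> k' \<le> card (S \<inter> M)}
           \<ge> 1 - 4 / real n"
proof -
  define c where "c = 1 - \<rho> - \<delta>"
  have r2: "2 * \<rho> < 1 - \<delta>" using assms(4) by simp
  have c0: "0 < c" using assms r2 unfolding c_def by linarith
  have r1: "0 < 1 - \<rho>" using assms r2 by linarith
  define N :: nat where "N = nat \<lceil>max 12 (max (12 powr (1 / (1 - \<rho>))) (4096 powr (1 / c)))\<rceil>"
  show ?thesis
  proof (intro exI[of _ N] allI impI)
    fix n m k k' :: nat and H :: "nat set set"
    assume nN: "N \<le> n" and hm: "real m = real n powr \<rho>" and mdvd: "m dvd n"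
      and H: "is_graph_on {1..m} H" and k'm: "k' \<le> m"
      and klo: "6 * real n powr (1 - \<delta>) * ln (real n) \<le> real k - real k'"
      and khi: "real k - real k' \<le> 2 * real n / 3"
    have nN': "max 12 (max (12 powr (1 / (1 - \<rho>))) (4096 powr (1 / c))) \<le> real n"
      using nN unfolding N_def by linarith
    have n12: "12 \<le> real n" using nN' by linarith
    hence n1: "1 \<le> n" by simp
    have npos: "0 < real n" using n12 by linarith
    define p where "p = real n powr (\<delta> - 1)"
    have p0: "0 \<le> p" unfolding p_def by simp
    have p1: "p \<le> 1" unfolding p_def using powr_mono[of "\<delta> - 1" 0 "real n"] n1 assms(2) npos by simp
    have "0 < real n powr \<rho>" using npos by simp
    hence "0 < real m" using hm by (simp only:)
    hence m0: "0 < m" by simp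
    have lnpos: "0 < ln (real n)" using n12 by simp
    have kk: "k' \<le> k"
    proof -
      have "0 \<le> 6 * real n powr (1 - \<delta>) * ln (real n)" using lnpos by simp
      thus ?thesis using klo by linarith
    qed
    have Kreal: "real (k - k') = real k - real k'" using kk by (simp add: of_nat_diff)
    have pK: "6 * ln (real n) \<le> p * real (k - k')"
    proof -
      have "p * (6 * real n powr (1 - \<delta>) * ln (real n)) = 6 * ln (real n) * (real n powr (\<delta> - 1) * real n powr (1 - \<delta>))"
        unfolding p_def by (simp add: algebra_simps)
      also have "real n powr (\<delta> - 1) * real n powr (1 - \<delta>) = 1" using npos by (simp add: powr_add[symmetric])
      finally have "6 * ln (real n) = p * (6 * real n powr (1 - \<delta>) * ln (real n))" by simp
      also have "\<dots> \<le> p * real (k - k')" using klo Kreal p0 by (intro mult_left_mono) auto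
      finally show ?thesis .
    qed
    have Kle: "3 * (k - k') \<le> 2 * n"
    proof -
      have "real (3 * (k - k')) \<le> real (2 * n)" using khi Kreal by simp
      thus ?thesis by linarith
    qed
    have Kn: "k - k' + 1 \<le> n" using Kle n12 by linarith
    have m12: "12 * m \<le> n"
    proof -
      have "12 \<le> (12 powr (1 / (1 - \<rho>))) powr (1 - \<rho>)" using r1 by (simp add: powr_powr)
      also have "\<dots> \<le> real n powr (1 - \<rho>)" using nN' r1 by (intro powr_mono2) auto
      finally have "12 * real n powr \<rho> \<le> real n powr (1 - \<rho>) * real n powr \<rho>"
        by (intro mult_right_mono) auto
      also have "\<dots> = real n" using npos by (simp add: powr_add[symmetric])
      finally have "real (12 * m) \<le> real n" using hm by simp
      thus ?thesis by linarith
    qed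
    define t where "t = n div 4"
    have tK: "t + m + (k - k') \<le> n" using Kle m12 unfolding t_def by linarith
    have mp: "real m * p \<le> 1 / 4096"
    proof -
      have e1: "real m * p = real n powr (\<rho> + (\<delta> - 1))" unfolding hm p_def using npos by (simp add: powr_add[symmetric])
      have "\<rho> + (\<delta> - 1) = - c" unfolding c_def by simp
      hence "real m * p = real n powr (- c)" using e1 by simp
      also have "\<dots> = 1 / real n powr c" by (simp add: powr_minus divide_inverse)
      also have "\<dots> \<le> 1 / 4096"
      proof -
        have "4096 = (4096 powr (1 / c)) powr c" using c0 by (simp add: powr_powr)
        also have "\<dots> \<le> real n powr c" using nN' c0 by (intro powr_mono2) auto
        finally show ?thesis using npos by (simp add: field_simps)
      qed
      finally show ?thesis .
    qed
    have big: "2 ^ n * (real m * p) ^ t \<le> 1 / real n"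
    proof -
      have "(real m * p) ^ t \<le> (1 / 4096) ^ t" using mp p0 by (intro power_mono) auto
      also have "(1 / 4096 :: real) ^ t = 1 / 2 ^ (12 * t)" by (simp add: power_mult power_one_over)
      also have "(2::real) ^ (2 * n) \<le> 2 ^ (12 * t)" using n12 unfolding t_def by (intro power_increasing) auto
      hence "1 / (2::real) ^ (12 * t) \<le> 1 / 2 ^ (2 * n)" by (intro divide_left_mono) auto
      finally have "2 ^ n * (real m * p) ^ t \<le> 2 ^ n * (1 / 2 ^ (2 * n))" by (intro mult_left_mono) auto
      also have "\<dots> = 1 / 2 ^ n" by (simp add: power_mult[symmetric] mult_2 power_add)
      also have "\<dots> \<le> 1 / real n"
      proof -
        have "real n \<le> 2 ^ n" using less_exp[of n] by (metis of_nat_le_iff of_nat_numeral of_nat_power less_imp_le)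
        thus ?thesis using npos by (intro divide_left_mono) auto
      qed
      finally show ?thesis .
    qed
    define Good where "Good = {(E, M). \<forall>S. S \<subseteq> {1..n} \<and> card S = k \<and> indep_set E S \<longrightarrow> k' \<le> card (S \<inter> M)}"
    have bad: "measure_pmf.prob (GH n p k m H k') (- Good) \<le> 2 / real n"
      unfolding Good_def using p0 p1 n1 m0 mdvd H kk pK Kn tK big by (rule main_finite)
    have "measure_pmf.prob (GH n p k m H k') (- Good) = 1 - measure_pmf.prob (GH n p k m H k') Good"
      using measure_pmf.prob_compl[of Good "GH n p k m H k'"] by (simp add: Compl_eq_Diff_UNIV)
    hence "1 - 2 / real n \<le> measure_pmf.prob (GH n p k m H k') Good" using bad by linarith
    moreover have "1 - 4 / real n \<le> 1 - 2 / real n" using npos by (simp add: field_simps)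
    ultimately show "1 - 4 / real n \<le> measure_pmf.prob (GH n (real n powr (\<delta> - 1)) k m H k')
             {(E, M). \<forall>S. S \<subseteq> {1..n} \<and> card S = k \<and> indep_set E S \<longrightarrow> k' \<le> card (S \<inter> M)}"
      unfolding Good_def p_def by linarith
  qed
qed


end
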